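(* Let $p\ge1$ and let $\mathbf W$ be a $p$-dimensional standard Brownian motion. For any fixed $M>0$, $$\mathbb P\Big(\sup_{1\le s\le t<\infty}t^{-\frac32}\|t\mathbf W(s)-s\mathbf W(t)\|_{I_p}\ge M\Big)=1.$$
   Context: For $\mathbf y\in\mathbb R^p$, $\|\mathbf y\|_{I_p}=\sqrt{\mathbf y^\top\mathbf y/p}$, i.e. the Euclidean norm divided by $\sqrt p$. *)

theory Defs
  imports "HOL-Probability.Probability"
begin

definition normI :: "real ^ 'p \<Rightarrow> real" where
  "normI y = sqrt ((y \<bullet> y) / real CARD('p))"

definition std_brownian_motion :: "'a measure \<Rightarrow> (real \<Rightarrow> 'a \<Rightarrow> real ^ 'p) \<Rightarrow> bool" where
  "std_brownian_motion M W \<longleftrightarrow>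
     prob_space M \<and>
     (\<forall>t\<ge>0. W t \<in> borel_measurable M) \<and>
     (\<forall>\<omega>\<in>space M. W 0 \<omega> = 0) \<and>
     (\<forall>\<omega>\<in>space M. continuous_on {0..} (\<lambda>t. W t \<omega>)) \<and>
     (\<forall>s t. 0 \<le> s \<and> s < t \<longrightarrow>
        distributed M lborel (\<lambda>\<omega>. W t \<omega> - W s \<omega>)
          (\<lambda>x. ennreal (\<Prod>i\<in>UNIV. normal_density 0 (sqrt (t - s)) (x $ i)))) \<and>
     (\<forall>(ts :: nat \<Rightarrow> real) n. 0 \<le> ts 0 \<and> (\<forall>i<n. ts i < ts (Suc i)) \<longrightarrow>
        prob_space.indep_vars M (\<lambda>_. borel) (\<lambda>i \<omega>. W (ts (Suc i)) \<omega> - W (ts i) \<omega>) {..<n})"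

end

theory Submission
  imports Defs
begin

definition Qm :: "(real ^ 'p) set \<Rightarrow> ennreal" where
  "Qm B = (\<integral>\<^sup>+ y. ennreal (\<Prod>i\<in>UNIV. normal_density 0 1 (y $ i)) * indicator B y \<partial>lborel)"

lemma nd_scale:
  assumes "\<sigma> > 0"
  shows "normal_density 0 \<sigma> (\<sigma> * u) = normal_density 0 1 u / \<sigma>"
  using assms by (simp add: normal_density_def power_mult_distrib real_sqrt_mult field_simps)

lemma scaling:
  fixes X :: "'a \<Rightarrow> real ^ 'p"
  assumes dist: "distributed M lborel X (\<lambda>x. ennreal (\<Prod>i\<in>UNIV. normal_density 0 \<sigma> (x $ i)))"
    and sp: "\<sigma> > 0" and A: "A \<in> sets borel"
  shows "emeasure M (X -` A \<inter> space M) = Qm {y. \<sigma> *\<^sub>R y \<in> A}"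
proof -
  have Xm: "X \<in> measurable M lborel" using dist by (rule distributed_measurable)
  have "emeasure M (X -` A \<inter> space M) = emeasure (distr M lborel X) A"
    using A Xm by (simp add: emeasure_distr)
  also have "\<dots> = emeasure (density lborel (\<lambda>x. ennreal (\<Prod>i\<in>UNIV. normal_density 0 \<sigma> (x $ i)))) A"
    using dist by (simp add: distributed_distr_eq_density)
  also have "\<dots> = (\<integral>\<^sup>+ x. ennreal (\<Prod>i\<in>UNIV. normal_density 0 \<sigma> (x $ i)) * indicator A x \<partial>lborel)"
    using A by (simp add: emeasure_density)
  also have "\<dots> = (\<integral>\<^sup>+ x. ennreal (\<Prod>i\<in>UNIV. normal_density 0 \<sigma> (x $ i)) * indicator A x
       \<partial>(density (distr lborel borel (\<lambda>x. 0 + \<sigma> *\<^sub>R x)) (\<lambda>_. \<bar>\<sigma>\<bar>^DIM(real^'p))))"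
    using lborel_affine[of \<sigma> "0::real^'p"] sp by simp
  also have "\<dots> = (\<integral>\<^sup>+ y. ennreal (\<bar>\<sigma>\<bar>^DIM(real^'p)) * (ennreal (\<Prod>i\<in>UNIV. normal_density 0 \<sigma> ((\<sigma> *\<^sub>R y) $ i)) * indicator A (\<sigma> *\<^sub>R y)) \<partial>lborel)"
    using A by (simp add: nn_integral_density nn_integral_distr)
  also have "\<dots> = Qm {y. \<sigma> *\<^sub>R y \<in> A}"
    unfolding Qm_def
  proof (rule nn_integral_cong)
    fix y :: "real^'p"
    have "(\<Prod>i\<in>UNIV. normal_density 0 \<sigma> ((\<sigma> *\<^sub>R y) $ i)) = (\<Prod>i\<in>UNIV. normal_density 0 1 (y $ i) / \<sigma>)"
      using sp by (simp add: nd_scale)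
    also have "\<dots> = (\<Prod>i\<in>UNIV. normal_density 0 1 (y $ i)) / \<sigma> ^ CARD('p)"
      by (simp add: prod_dividef)
    finally have "\<bar>\<sigma>\<bar>^DIM(real^'p) * (\<Prod>i\<in>UNIV. normal_density 0 \<sigma> ((\<sigma> *\<^sub>R y) $ i)) = (\<Prod>i\<in>UNIV. normal_density 0 1 (y $ i))"
      using sp by simp
    then show "ennreal (\<bar>\<sigma>\<bar>^DIM(real^'p)) * (ennreal (\<Prod>i\<in>UNIV. normal_density 0 \<sigma> ((\<sigma> *\<^sub>R y) $ i)) * indicator A (\<sigma> *\<^sub>R y))
       = ennreal (\<Prod>i\<in>UNIV. normal_density 0 1 (y $ i)) * indicator {y. \<sigma> *\<^sub>R y \<in> A} y"
      by (auto simp: indicator_def ennreal_mult'[symmetric] prod_nonneg mult.assoc[symmetric] simp del: ennreal_mult')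
  qed
  finally show ?thesis .
qed


lemma Qm_pos:
  fixes B :: "(real ^ 'p) set"
  assumes B: "B \<in> sets borel" and sub: "ball c r \<subseteq> B" and r: "r > 0"
  shows "Qm B > 0"
proof (rule ccontr)
  assume "\<not> Qm B > 0"
  then have "Qm B = 0" by (simp add: not_gr_zero)
  then have "AE y in lborel. ennreal (\<Prod>i\<in>UNIV. normal_density 0 1 (y $ i)) * indicator B y = 0"
    unfolding Qm_def using B by (subst (asm) nn_integral_0_iff_AE) auto
  then have "AE y in lborel. y \<notin> B"
  proof (rule AE_mp, intro AE_I2 impI)
    fix y :: "real^'p"
    assume "ennreal (\<Prod>i\<in>UNIV. normal_density 0 1 (y $ i)) * indicator B y = 0"
    moreover have "(\<Prod>i\<in>UNIV. normal_density 0 1 (y $ i)) > 0"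
      by (intro prod_pos) (simp add: normal_density_pos)
    ultimately show "y \<notin> B" by (auto simp: indicator_def simp del: prod_zero_iff)
  qed
  then have "emeasure lborel B = 0"
    using B by (subst (asm) AE_iff_measurable[of B]) auto
  then have "emeasure lborel (ball c r) = 0"
    using sub B by (metis emeasure_mono le_zero_eq sets_lborel)
  then have "measure lborel (ball c r) = 0" by (simp add: measure_def)
  with content_ball_pos[OF r, of c] show False by simp
qed


lemma indep_blocks:
  fixes X :: "nat \<Rightarrow> 'a \<Rightarrow> real ^ 'p"
  assumes ps: "prob_space M"
    and ind: "prob_space.indep_vars M (\<lambda>_. borel) X {..<2*n}"
    and c: "\<And>k. k < n \<Longrightarrow> measure M {\<omega>\<in>space M. norm (X (2*k) \<omega>) > a k} *
                 measure M {\<omega>\<in>space M. norm (X (2*k+1) \<omega>) \<le> b k} = c"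
  shows "measure M {\<omega>\<in>space M. \<forall>k<n. \<not> (norm (X (2*k) \<omega>) > a k \<and> norm (X (2*k+1) \<omega>) \<le> b k)} = (1 - c) ^ n"
proof -
  interpret prob_space M by (rule ps)
  have rv: "\<And>i. i < 2*n \<Longrightarrow> X i \<in> borel_measurable M"
    using ind unfolding indep_vars_def by auto
  show ?thesis
  proof (cases "n = 0")
    case True
    then show ?thesis by (simp add: prob_space)
  next
    case False
    define K where "K k = {2*k, 2*k+1}" for k :: nat
    define V where "V k \<omega> = restrict (\<lambda>i. X i \<omega>) (K k)" for k \<omega>
    have indV: "indep_vars (\<lambda>k. PiM (K k) (\<lambda>_. borel)) V {..<n}"
      unfolding V_def
      by (rule indep_vars_restrict[OF ind]) (auto simp: K_def disjoint_family_on_def)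
    define Y where "Y k f = (norm (f (2*k) :: real^'p) > a k \<and> norm (f (2*k+1) :: real^'p) \<le> b k)" for k f
    have Ym: "Y k \<in> measurable (PiM (K k) (\<lambda>_. borel)) (count_space UNIV)" for k
    proof -
      have 1: "(\<lambda>f. f (2*k)) \<in> measurable (PiM (K k) (\<lambda>_. borel)) (borel :: (real^'p) measure)"
        by (rule measurable_component_singleton) (simp add: K_def)
      have 2: "(\<lambda>f. f (2*k+1)) \<in> measurable (PiM (K k) (\<lambda>_. borel)) (borel :: (real^'p) measure)"
        by (rule measurable_component_singleton) (simp add: K_def)
      show ?thesis unfolding Y_def pred_def[symmetric] using 1 2 by measurable
    qed
    have indZ: "indep_vars (\<lambda>_. count_space UNIV) (\<lambda>k \<omega>. Y k (V k \<omega>)) {..<n}"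
      by (rule indep_vars_compose2[OF indV]) (rule Ym)
    have eqZ: "(\<lambda>\<omega>. Y k (V k \<omega>)) = (\<lambda>\<omega>. norm (X (2*k) \<omega>) > a k \<and> norm (X (2*k+1) \<omega>) \<le> b k)" for k
      by (simp add: Y_def V_def K_def)
    have "prob (\<Inter>k\<in>{..<n}. (\<lambda>\<omega>. Y k (V k \<omega>)) -` {False} \<inter> space M)
        = (\<Prod>k\<in>{..<n}. prob ((\<lambda>\<omega>. Y k (V k \<omega>)) -` {False} \<inter> space M))"
      by (rule indep_varsD_finite[OF indZ]) (use False in auto)
    moreover have "(\<Inter>k\<in>{..<n}. (\<lambda>\<omega>. Y k (V k \<omega>)) -` {False} \<inter> space M) =
       {\<omega>\<in>space M. \<forall>k<n. \<not> (norm (X (2*k) \<omega>) > a k \<and> norm (X (2*k+1) \<omega>) \<le> b k)}"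
      using False by (auto simp: eqZ)
    moreover have "prob ((\<lambda>\<omega>. Y k (V k \<omega>)) -` {False} \<inter> space M) = 1 - c" if k: "k < n" for k
    proof -
      have m1: "X (2*k) \<in> borel_measurable M" using k by (intro rv) auto
      have m2: "X (2*k+1) \<in> borel_measurable M" using k by (intro rv) auto
      define A where "A i = (if i = 2*k then {x::real^'p. norm x > a k} else {x. norm x \<le> b k})" for i
      have "prob (\<Inter>i\<in>{2*k, 2*k+1}. X i -` A i \<inter> space M) = (\<Prod>i\<in>{2*k, 2*k+1}. prob (X i -` A i \<inter> space M))"
        by (rule indep_varsD[OF ind]) (use k in \<open>auto simp: A_def\<close>)
      then have "prob {\<omega>\<in>space M. norm (X (2*k) \<omega>) > a k \<and> norm (X (2*k+1) \<omega>) \<le> b k} = c"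
        using c[OF k] by (simp add: A_def Int_def conj_commute conj_left_commute)
      moreover have "{\<omega>\<in>space M. norm (X (2*k) \<omega>) > a k \<and> norm (X (2*k+1) \<omega>) \<le> b k} \<in> events"
        using m1 m2 by measurable
      ultimately have "prob (space M - {\<omega>\<in>space M. norm (X (2*k) \<omega>) > a k \<and> norm (X (2*k+1) \<omega>) \<le> b k}) = 1 - c"
        by (simp add: prob_compl)
      moreover have "space M - {\<omega>\<in>space M. norm (X (2*k) \<omega>) > a k \<and> norm (X (2*k+1) \<omega>) \<le> b k}
          = (\<lambda>\<omega>. Y k (V k \<omega>)) -` {False} \<inter> space M"
        by (auto simp: eqZ)
      ultimately show ?thesis by simp
    qed
    ultimately show ?thesis by simp
  qed
qed


lemma normI_eq: "normI (y :: real^'p) = norm y / sqrt (real CARD('p))"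
  unfolding normI_def by (simp add: real_sqrt_divide norm_eq_sqrt_inner)

lemma powr_32: "t > 0 \<Longrightarrow> t powr (-3/2) = 1 / (t * sqrt t)"
proof -
  assume t: "t > 0"
  have "t powr (3/2) = t powr (1 + 1/2)" by simp
  also have "\<dots> = t * sqrt t" using t by (simp only: powr_add powr_half_sqrt powr_one)
  finally show ?thesis using t by (simp add: powr_minus_divide)
qed

lemma comb: fixes a b c :: "'v::real_vector"
  shows "s *\<^sub>R ((b - a) - (c - b)) = ((3 * s) *\<^sub>R a - s *\<^sub>R c) - 2 *\<^sub>R ((2 * s) *\<^sub>R a - s *\<^sub>R b)"
proof -
  have "((3 * s) *\<^sub>R a - s *\<^sub>R c) - 2 *\<^sub>R ((2 * s) *\<^sub>R a - s *\<^sub>R b) = (3 * s - 4 * s) *\<^sub>R a + (2 * s) *\<^sub>R b - s *\<^sub>R c"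
    by (simp add: scaleR_diff_right scaleR_left_diff_distrib algebra_simps) (subst scaleR_add_left[symmetric], simp)
  also have "\<dots> = s *\<^sub>R ((b - a) - (c - b))"
    by (simp add: scaleR_diff_right algebra_simps flip: scaleR_add_left)
  finally show ?thesis ..
qed

lemma bound_from_sup:
  fixes w :: "real \<Rightarrow> real ^ 'p"
  assumes H: "\<And>s t. 1 \<le> s \<Longrightarrow> s \<le> t \<Longrightarrow> t powr (-3/2) * normI (t *\<^sub>R w s - s *\<^sub>R w t) < K"
    and t: "1 \<le> s" "s \<le> t"
  shows "norm (t *\<^sub>R w s - s *\<^sub>R w t) < K * sqrt (real CARD('p)) * (t * sqrt t)"
proof -
  have tp: "t > 0" "sqrt t > 0" using t by auto
  have cp: "sqrt (real CARD('p)) > 0" by simp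
  have "norm (t *\<^sub>R w s - s *\<^sub>R w t) / (sqrt (real CARD('p)) * (t * sqrt t)) < K"
  proof -
    have "t powr (-3/2) * normI (t *\<^sub>R w s - s *\<^sub>R w t) < K" by (rule H[OF t])
    then show ?thesis unfolding powr_32[OF tp(1)] normI_eq using tp cp by (simp add: field_simps)
  qed
  then show ?thesis using tp cp by (simp add: divide_less_eq mult.commute mult.left_commute)
qed

lemma det:
  fixes w :: "real \<Rightarrow> real ^ 'p"
  assumes H: "\<And>s t. 1 \<le> s \<Longrightarrow> s \<le> t \<Longrightarrow> t powr (-3/2) * normI (t *\<^sub>R w s - s *\<^sub>R w t) < K"
    and s: "1 \<le> s"
  shows "norm ((w (2 * s) - w s) - (w (3 * s) - w (2 * s))) \<le> 12 * K * sqrt (real CARD('p)) * sqrt s"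
proof -
  let ?c = "sqrt (real CARD('p))"
  have sp: "s > 0" "sqrt s > 0" using s by auto
  have D1: "norm ((2 * s) *\<^sub>R w s - s *\<^sub>R w (2 * s)) < K * ?c * ((2 * s) * sqrt (2 * s))"
    by (rule bound_from_sup[OF H]) (use s in auto)
  have D2: "norm ((3 * s) *\<^sub>R w s - s *\<^sub>R w (3 * s)) < K * ?c * ((3 * s) * sqrt (3 * s))"
    by (rule bound_from_sup[OF H]) (use s in auto)
  have K0: "K * ?c \<ge> 0"
  proof -
    have "0 \<le> norm ((2 * s) *\<^sub>R w s - s *\<^sub>R w (2 * s))" by simp
    with D1 have "0 < K * ?c * ((2 * s) * sqrt (2 * s))" by linarith
    moreover have "(2 * s) * sqrt (2 * s) > 0" using sp by simp
    ultimately show ?thesis using zero_less_mult_pos2 by (metis less_eq_real_def)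
  qed
  have eq: "s *\<^sub>R ((w (2 * s) - w s) - (w (3 * s) - w (2 * s))) =
      ((3 * s) *\<^sub>R w s - s *\<^sub>R w (3 * s)) - 2 *\<^sub>R ((2 * s) *\<^sub>R w s - s *\<^sub>R w (2 * s))"
    by (rule comb)
  have "s * norm ((w (2 * s) - w s) - (w (3 * s) - w (2 * s))) =
      norm (((3 * s) *\<^sub>R w s - s *\<^sub>R w (3 * s)) - 2 *\<^sub>R ((2 * s) *\<^sub>R w s - s *\<^sub>R w (2 * s)))"
    using sp by (simp flip: eq)
  also have "\<dots> \<le> norm ((3 * s) *\<^sub>R w s - s *\<^sub>R w (3 * s)) + 2 * norm ((2 * s) *\<^sub>R w s - s *\<^sub>R w (2 * s))"
    by (rule order.trans[OF norm_triangle_ineq4]) simp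
  also have "\<dots> \<le> K * ?c * ((3 * s) * sqrt (3 * s)) + 2 * (K * ?c * ((2 * s) * sqrt (2 * s)))"
    using D1 D2 by linarith
  also have "\<dots> = K * ?c * s * sqrt s * (3 * sqrt 3 + 4 * sqrt 2)"
  proof -
    have h3: "sqrt (3 * s) = sqrt 3 * sqrt s" by (rule real_sqrt_mult)
    have h2: "sqrt (2 * s) = sqrt 2 * sqrt s" by (rule real_sqrt_mult)
    show ?thesis unfolding h3 h2 by (simp add: algebra_simps)
  qed
  also have "\<dots> \<le> K * ?c * s * sqrt s * 12"
  proof -
    have "sqrt 3 \<le> 2" by (rule real_le_lsqrt) auto
    moreover have "sqrt 2 \<le> 3/2" by (rule real_le_lsqrt) (auto simp: power2_eq_square)
    ultimately have "3 * sqrt 3 + 4 * sqrt 2 \<le> 12" by linarith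
    moreover have "K * ?c * s * sqrt s \<ge> 0" using K0 sp by simp
    ultimately show ?thesis by (intro mult_left_mono) auto
  qed
  finally have "s * norm ((w (2 * s) - w s) - (w (3 * s) - w (2 * s))) \<le> s * (12 * K * ?c * sqrt s)"
    by (simp add: algebra_simps)
  then show ?thesis using sp by simp
qed


lemma rat_near:
  assumes x: "x \<in> {(s, t). 1 \<le> s \<and> s \<le> (t::real)}" and d: "d > 0"
  shows "\<exists>y\<in>{(s, t). s \<in> \<rat> \<and> t \<in> \<rat> \<and> 1 \<le> s \<and> s \<le> t}. dist y x < d"
proof -
  obtain s t where st: "x = (s, t)" "1 \<le> s" "s \<le> t" using x by auto
  obtain q1 where q1: "q1 \<in> \<rat>" "s < q1" "q1 < s + d/4" using Rats_dense_in_real[of s "s + d/4"] d by auto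
  obtain q2 where q2: "q2 \<in> \<rat>" "t + d/4 < q2" "q2 < t + d/2" using Rats_dense_in_real[of "t + d/4" "t + d/2"] d by auto
  have "dist (q1, q2) (s, t) = sqrt ((dist q1 s)\<^sup>2 + (dist q2 t)\<^sup>2)" by (rule dist_Pair_Pair)
  also have "\<dots> \<le> \<bar>dist q1 s\<bar> + \<bar>dist q2 t\<bar>" by (rule sqrt_sum_squares_le_sum_abs)
  also have "\<dots> < d" using q1 q2 d by (simp add: dist_real_def)
  finally show ?thesis using st q1 q2 by (intro bexI[of _ "(q1, q2)"]) auto
qed

lemma sup_dense:
  fixes g :: "real \<times> real \<Rightarrow> real"
  defines "R \<equiv> {(s, t). 1 \<le> s \<and> s \<le> (t::real)}"
    and "D \<equiv> {(s, t). s \<in> \<rat> \<and> t \<in> \<rat> \<and> 1 \<le> s \<and> s \<le> (t::real)}"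
  assumes cont: "continuous_on R g"
  shows "(SUP x\<in>R. ereal (g x)) = (SUP x\<in>D. ereal (g x))"
proof (rule antisym)
  show "(SUP x\<in>D. ereal (g x)) \<le> (SUP x\<in>R. ereal (g x))"
    by (rule SUP_subset_mono) (auto simp: R_def D_def)
  show "(SUP x\<in>R. ereal (g x)) \<le> (SUP x\<in>D. ereal (g x))"
  proof (rule SUP_least, rule ccontr)
    fix x assume xR: "x \<in> R" and nle: "\<not> ereal (g x) \<le> (SUP x\<in>D. ereal (g x))"
    let ?m = "SUP x\<in>D. ereal (g x)"
    have "?m < ereal (g x)" using nle by simp
    then obtain r where r: "?m < ereal r" "ereal r < ereal (g x)" using ereal_dense2 by blast
    have e: "g x - r > 0" using r by simp
    obtain d where d: "d > 0" "\<forall>y\<in>R. dist y x < d \<longrightarrow> dist (g y) (g x) < g x - r"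
      using cont xR e unfolding continuous_on_iff by blast
    obtain y where y: "y \<in> D" "dist y x < d"
      using rat_near[of x d] xR d unfolding R_def D_def by blast
    have "y \<in> R" using y unfolding R_def D_def by auto
    then have "dist (g y) (g x) < g x - r" using d y by blast
    then have "g y > r" by (simp add: dist_real_def)
    moreover have "ereal (g y) \<le> ?m" using y by (intro SUP_upper) auto
    ultimately show False using r by (metis ereal_less_eq(3) less_le_not_le order.trans)
  qed
qed


lemma cont_g:
  fixes w :: "real \<Rightarrow> real ^ 'p"
  assumes cw: "continuous_on {0..} w"
  shows "continuous_on {(s, t). 1 \<le> s \<and> s \<le> (t::real)}
           (\<lambda>x. snd x powr (-3/2) * normI (snd x *\<^sub>R w (fst x) - fst x *\<^sub>R w (snd x)))"
proof -
  let ?R = "{(s, t). 1 \<le> s \<and> s \<le> (t::real)}"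
  have c1: "continuous_on ?R (\<lambda>x. w (fst x))"
    by (rule continuous_on_compose2[OF cw continuous_on_fst]) auto
  have c2: "continuous_on ?R (\<lambda>x. w (snd x))"
    by (rule continuous_on_compose2[OF cw continuous_on_snd]) auto
  have c3: "continuous_on ?R (\<lambda>x. snd x powr (-3/2))"
    by (intro continuous_on_powr continuous_on_snd continuous_on_const) auto
  show ?thesis unfolding normI_eq
    by (intro continuous_on_mult c3 continuous_on_divide continuous_on_norm continuous_on_diff
          continuous_on_scaleR continuous_on_fst continuous_on_snd c1 c2 continuous_on_const) auto
qed


theorem proposition2p2:
  fixes M :: "'a measure" and W :: "real \<Rightarrow> 'a \<Rightarrow> real ^ 'p" and K :: real
  assumes "std_brownian_motion M W"
    and "K > 0"
  shows "measure M {\<omega> \<in> space M.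
           (SUP (s, t) \<in> {(s, t). 1 \<le> s \<and> s \<le> t}.
              ereal (t powr (-3/2) * normI (t *\<^sub>R W s \<omega> - s *\<^sub>R W t \<omega>))) \<ge> ereal K} = 1"
proof -
  note BM = assms(1)[unfolded std_brownian_motion_def]
  interpret prob_space M using BM by blast
  have Wm[measurable]: "\<And>t. t \<ge> 0 \<Longrightarrow> W t \<in> borel_measurable M" using BM by blast
  have Wc: "\<And>\<omega>. \<omega> \<in> space M \<Longrightarrow> continuous_on {0..} (\<lambda>t. W t \<omega>)" using BM by blast
  have Wd: "\<And>s t. 0 \<le> s \<Longrightarrow> s < t \<Longrightarrow> distributed M lborel (\<lambda>\<omega>. W t \<omega> - W s \<omega>)
          (\<lambda>x. ennreal (\<Prod>i\<in>UNIV. normal_density 0 (sqrt (t - s)) (x $ i)))" using BM by blast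
  have Wi: "\<And>(ts :: nat \<Rightarrow> real) n. 0 \<le> ts 0 \<Longrightarrow> (\<forall>i<n. ts i < ts (Suc i)) \<Longrightarrow>
        indep_vars (\<lambda>_. borel) (\<lambda>i \<omega>. W (ts (Suc i)) \<omega> - W (ts i) \<omega>) {..<n}" using BM by blast
  define R where "R = {(s, t). 1 \<le> s \<and> s \<le> (t::real)}"
  define D where "D = {(s, t). s \<in> \<rat> \<and> t \<in> \<rat> \<and> 1 \<le> s \<and> s \<le> (t::real)}"
  define g where "g \<omega> x = snd x powr (-3/2) * normI (snd x *\<^sub>R W (fst x) \<omega> - fst x *\<^sub>R W (snd x) \<omega>)" for \<omega> x
  define F where "F \<omega> = (SUP (s, t) \<in> {(s, t). 1 \<le> s \<and> s \<le> t}.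
              ereal (t powr (-3/2) * normI (t *\<^sub>R W s \<omega> - s *\<^sub>R W t \<omega>)))" for \<omega>
  have F_R: "F \<omega> = (SUP x\<in>R. ereal (g \<omega> x))" for \<omega>
    unfolding F_def R_def g_def by (rule SUP_cong) (auto split: prod.split)
  have F_D: "F \<omega> = (SUP x\<in>D. ereal (g \<omega> x))" if "\<omega> \<in> space M" for \<omega>
    unfolding F_R R_def D_def
    by (rule sup_dense) (unfold g_def, rule cont_g, rule Wc[OF that])
  have cD: "countable D"
  proof -
    have "D \<subseteq> \<rat> \<times> \<rat>" unfolding D_def by auto
    moreover have "countable (\<rat> \<times> (\<rat>::real set))" by (intro countable_SIGMA countable_rat)
    ultimately show ?thesis by (metis countable_subset)
  qed
  have gm: "(\<lambda>\<omega>. ereal (g \<omega> x)) \<in> borel_measurable M" if "x \<in> D" for x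
  proof -
    have [measurable]: "W (fst x) \<in> borel_measurable M" "W (snd x) \<in> borel_measurable M"
      using that by (auto simp: D_def intro!: Wm)
    show ?thesis unfolding g_def normI_eq by measurable
  qed
  have FDm: "(\<lambda>\<omega>. SUP x\<in>D. ereal (g \<omega> x)) \<in> borel_measurable M"
    by (rule borel_measurable_SUP[OF cD gm])
  define S where "S = {\<omega> \<in> space M. F \<omega> \<ge> ereal K}"
  have S_eq: "S = {\<omega> \<in> space M. (SUP x\<in>D. ereal (g \<omega> x)) \<ge> ereal K}"
    unfolding S_def using F_D by auto
  have Sev: "S \<in> events" unfolding S_eq using FDm by measurable
  define E where "E = space M - S"
  have Eev: "E \<in> events" unfolding E_def using Sev by auto
  define C where "C = 12 * K * sqrt (real CARD('p))"
  have Cpos: "C > 0" unfolding C_def using assms(2) by simp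
  define B1 where "B1 = {y::real^'p. norm y > C + 1}"
  define B2 where "B2 = {y::real^'p. norm y \<le> 1}"
  define ts where "ts i = (if even i then 3 ^ (i div 2) else 2 * 3 ^ (i div 2) :: real)" for i
  have ts_mono: "ts i < ts (Suc i)" for i
  proof (cases "even i")
    case True
    then have "Suc i div 2 = i div 2" by presburger
    then show ?thesis using True by (simp add: ts_def)
  next
    case False
    then have "Suc i div 2 = Suc (i div 2)" by presburger
    then show ?thesis using False by (simp add: ts_def)
  qed
  have ts0: "ts i \<ge> 1" for i
  proof -
    have "(1::real) \<le> 3 ^ (i div 2)" by simp
    moreover from this have "(1::real) \<le> 2 * 3 ^ (i div 2)" by linarith
    ultimately show ?thesis unfolding ts_def by (simp del: one_le_power)
  qed
  define X where "X i \<omega> = W (ts (Suc i)) \<omega> - W (ts i) \<omega>" for i \<omega>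
  have Xm[measurable]: "X i \<in> borel_measurable M" for i
  proof -
    have [measurable]: "W (ts i) \<in> borel_measurable M" "W (ts (Suc i)) \<in> borel_measurable M"
      using ts0[of i] ts0[of "Suc i"] by (auto intro!: Wm)
    show ?thesis unfolding X_def by measurable
  qed
  have X0: "X (2*k) = (\<lambda>\<omega>. W (2 * 3^k) \<omega> - W (3^k) \<omega>)" for k
    by (rule ext) (simp add: X_def ts_def)
  have X1: "X (2*k+1) = (\<lambda>\<omega>. W (3 * 3^k) \<omega> - W (2 * 3^k) \<omega>)" for k
  proof -
    have "Suc (Suc (2*k)) div 2 = Suc k" by presburger
    then show ?thesis by (intro ext) (simp add: X_def ts_def)
  qed
  have dX0: "distributed M lborel (X (2*k)) (\<lambda>x. ennreal (\<Prod>i\<in>UNIV. normal_density 0 (sqrt (3^k)) (x $ i)))" for k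
  proof -
    have e: "(2::real) * 3^k - 3^k = 3^k" by simp
    show ?thesis unfolding X0 using Wd[of "3^k" "2 * 3^k"] unfolding e by simp
  qed
  have dX1: "distributed M lborel (X (2*k+1)) (\<lambda>x. ennreal (\<Prod>i\<in>UNIV. normal_density 0 (sqrt (3^k)) (x $ i)))" for k
  proof -
    have e: "(3::real) * 3^k - 2 * 3^k = 3^k" by simp
    show ?thesis unfolding X1 using Wd[of "2 * 3^k" "3 * 3^k"] unfolding e by simp
  qed
  have p1: "measure M {\<omega>\<in>space M. norm (X (2*k) \<omega>) > (C+1) * sqrt (3^k)} = enn2real (Qm B1)" for k
  proof -
    have sp: "sqrt ((3::real)^k) > 0" by simp
    have "emeasure M (X (2*k) -` {x. norm x > (C+1) * sqrt (3^k)} \<inter> space M)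
        = Qm {y. sqrt (3^k) *\<^sub>R y \<in> {x::real^'p. norm x > (C+1) * sqrt (3^k)}}"
      apply (rule scaling) using dX0[of k] apply simp using sp apply simp by measurable
    also have "{y. sqrt (3^k) *\<^sub>R y \<in> {x::real^'p. norm x > (C+1) * sqrt (3^k)}} = B1"
      unfolding B1_def using sp by auto
    finally show ?thesis by (simp add: measure_def vimage_def Int_def conj_commute)
  qed
  have p2: "measure M {\<omega>\<in>space M. norm (X (2*k+1) \<omega>) \<le> sqrt (3^k)} = enn2real (Qm B2)" for k
  proof -
    have sp: "sqrt ((3::real)^k) > 0" by simp
    have "emeasure M (X (2*k+1) -` {x. norm x \<le> sqrt (3^k)} \<inter> space M)
        = Qm {y. sqrt (3^k) *\<^sub>R y \<in> {x::real^'p. norm x \<le> sqrt (3^k)}}"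
      apply (rule scaling) using dX1[of k] apply simp using sp apply simp by measurable
    also have "{y. sqrt (3^k) *\<^sub>R y \<in> {x::real^'p. norm x \<le> sqrt (3^k)}} = B2"
      unfolding B2_def using sp by (auto simp: mult_le_cancel_left1)
    finally show ?thesis by (simp add: measure_def vimage_def Int_def conj_commute)
  qed
  have QB1: "Qm B1 > 0" "Qm B1 < top"
  proof -
    obtain y0 :: "real^'p" where y0: "norm y0 = C + 2" using vector_choose_size[of "C+2"] Cpos by auto
    have "ball y0 1 \<subseteq> B1" unfolding B1_def
    proof
      fix y assume "y \<in> ball y0 1"
      then have "norm (y0 - y) < 1" by (simp add: dist_norm)
      moreover have "norm y0 - norm y \<le> norm (y0 - y)" by (rule norm_triangle_ineq2)
      ultimately show "y \<in> {y. C + 1 < norm y}" using y0 by simp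
    qed
    moreover have "B1 \<in> sets borel" unfolding B1_def by measurable
    ultimately show "Qm B1 > 0" by (intro Qm_pos) auto
    have "emeasure M (X 0 -` {x. norm x > (C+1) * sqrt (3^0)} \<inter> space M)
        = Qm {y. sqrt (3^0) *\<^sub>R y \<in> {x::real^'p. norm x > (C+1) * sqrt (3^0)}}"
      apply (rule scaling) using dX0[of 0] apply simp apply simp by measurable
    moreover have "{y. sqrt (3^0) *\<^sub>R y \<in> {x::real^'p. norm x > (C+1) * sqrt (3^0)}} = B1"
      unfolding B1_def by auto
    ultimately show "Qm B1 < top" using emeasure_le_1 by (metis ennreal_one_less_top order.strict_trans1)
  qed
  have QB2: "Qm B2 > 0" "Qm B2 < top"
  proof -
    have "ball 0 1 \<subseteq> B2" unfolding B2_def by auto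
    moreover have "B2 \<in> sets borel" unfolding B2_def by measurable
    ultimately show "Qm B2 > 0" by (intro Qm_pos) auto
    have "emeasure M (X 1 -` {x. norm x \<le> sqrt (3^0)} \<inter> space M)
        = Qm {y. sqrt (3^0) *\<^sub>R y \<in> {x::real^'p. norm x \<le> sqrt (3^0)}}"
      apply (rule scaling) using dX1[of 0] apply simp apply simp by measurable
    moreover have "{y. sqrt (3^0) *\<^sub>R y \<in> {x::real^'p. norm x \<le> sqrt (3^0)}} = B2"
      unfolding B2_def by auto
    ultimately show "Qm B2 < top" using emeasure_le_1 by (metis ennreal_one_less_top order.strict_trans1)
  qed
  define c where "c = enn2real (Qm B1) * enn2real (Qm B2)"
  have cpos: "c > 0" unfolding c_def using QB1 QB2 by (simp add: enn2real_positive_iff)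
  have cle: "c \<le> 1"
  proof -
    have "enn2real (Qm B1) \<le> 1" "enn2real (Qm B2) \<le> 1"
      using p1[of 0] p2[of 0] prob_le_1 by metis+
    moreover have "enn2real (Qm B1) \<ge> 0" "enn2real (Qm B2) \<ge> 0" by auto
    ultimately show ?thesis unfolding c_def by (intro mult_le_one) auto
  qed
  define G where "G n = {\<omega>\<in>space M. \<forall>k<n. \<not> (norm (X (2*k) \<omega>) > (C+1) * sqrt (3^k) \<and> norm (X (2*k+1) \<omega>) \<le> sqrt (3^k))}" for n
  have PG: "measure M (G n) = (1 - c) ^ n" for n
    unfolding G_def
  proof (rule indep_blocks)
    show "prob_space M" by (rule prob_space_axioms)
    show "indep_vars (\<lambda>_. borel) X {..<2*n}"
      unfolding X_def by (rule Wi) (use ts0[of 0] ts_mono in auto)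
    show "prob {\<omega> \<in> space M. (C+1) * sqrt (3^k) < norm (X (2*k) \<omega>)} *
          prob {\<omega> \<in> space M. norm (X (2*k+1) \<omega>) \<le> sqrt (3^k)} = c" for k
      using p1[of k] p2[of k] unfolding c_def by simp
  qed
  have Gev: "G n \<in> events" for n unfolding G_def by measurable
  have EG: "E \<subseteq> G n" for n
  proof
    fix \<omega> assume "\<omega> \<in> E"
    then have om: "\<omega> \<in> space M" and nF: "\<not> F \<omega> \<ge> ereal K" unfolding E_def S_def by auto
    have H: "t powr (-3/2) * normI (t *\<^sub>R W s \<omega> - s *\<^sub>R W t \<omega>) < K" if "1 \<le> s" "s \<le> t" for s t
    proof -
      have "ereal (g \<omega> (s, t)) \<le> F \<omega>" unfolding F_R R_def by (rule SUP_upper) (use that in auto)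
      moreover have "F \<omega> < ereal K" using nF by (simp add: not_le)
      ultimately have "ereal (g \<omega> (s, t)) < ereal K" by (rule le_less_trans)
      then show ?thesis by (simp add: g_def)
    qed
    show "\<omega> \<in> G n" unfolding G_def
    proof (intro CollectI conjI allI impI notI om)
      fix k assume "k < n" and bad: "(C+1) * sqrt (3^k) < norm (X (2*k) \<omega>) \<and> norm (X (2*k+1) \<omega>) \<le> sqrt (3^k)"
      have s1: "1 \<le> (3::real)^k" by simp
      have "norm ((W (2 * 3^k) \<omega> - W (3^k) \<omega>) - (W (3 * 3^k) \<omega> - W (2 * 3^k) \<omega>)) \<le> 12 * K * sqrt (real CARD('p)) * sqrt (3^k)"
        by (rule det[of "\<lambda>t. W t \<omega>", OF H s1])
      then have A: "norm (X (2*k) \<omega> - X (2*k+1) \<omega>) \<le> C * sqrt (3^k)"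
        unfolding X0 X1 C_def by simp
      have "norm (X (2*k) \<omega>) - norm (X (2*k+1) \<omega>) \<le> norm (X (2*k) \<omega> - X (2*k+1) \<omega>)"
        by (rule norm_triangle_ineq2)
      with A bad show False by (simp add: algebra_simps)
    qed
  qed
  have PE: "prob E = 0"
  proof -
    have le: "prob E \<le> (1 - c) ^ n" for n
      using finite_measure_mono[OF EG Gev] PG by simp
    have "(\<lambda>n. (1 - c) ^ n) \<longlonglongrightarrow> 0"
      by (rule LIMSEQ_power_zero) (use cpos cle in simp)
    then have "prob E \<le> 0" by (rule LIMSEQ_le_const) (use le in auto)
    then show ?thesis using measure_nonneg[of M E] by simp
  qed
  have "S = space M - E" unfolding E_def S_def by auto
  then have "prob S = 1" using prob_compl[OF Eev] PE by simp
  then show ?thesis unfolding S_def F_def .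
qed

end
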